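(* Consider either the FMM or the MMM with a mutant fitness distribution $\mu$ satisfying $G(x)>0$ for all $x>0$, and $\beta\in(0,1)$. For $t\in\mathbb N_0$ let $W_t$ be the fitness of the fittest of all mutants produced in generation $t$ (in the FMM this includes the mutants that die instantly), with $W_t=0$ if there is no mutant in generation $t$. Then almost surely on the event of survival the sequence $(W_t)_{t\ge0}$ is unbounded.
   Context: Models: Fix a probability distribution $\mu$ on $(0,\infty)$ and $\beta\in(0,1)$. The population evolves in discrete generations $t=0,1,2,\dots$; generation $0$ consists of a single individual with fitness $f>0$. Each individual of generation $t$ independently produces a Poisson distributed number of offspring whose mean equals its fitness. Each offspring independently, with probability $1-\beta$, inherits its parent's fitness and joins generation $t+1$; otherwise (probability $\beta$) it is a mutant. In the fittest mutant model (FMM), every mutant gets an independent fitness sampled from $\mu$, and only the fittest mutant of generation $t+1$ (if any mutant exists) is added to generation $t+1$; all other mutants die instantly. In the multiple mutant model (MMM), every mutant gets an independent fitness sampled from $\mu$ and all mutants are added to generation $t+1$. $X(t)$ is the number of individuals in generation $t$; survival is the event $\{X(t)\neq0 \text{ for all } t\}$. Write $G(x):=\mu((x,\infty))$. *)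

theory Defs
  imports "HOL-Probability.Probability"
begin

text \<open>
  Explicit construction of the FMM and MMM from independent primitive randomness.
  Individual number n of generation t (positions in a list) uses
    xi (Off t n)    : uniform on (0,1), converted to a Poisson(fitness) number of offspring
                      by inverse transform sampling;
    xi (Mut t n j)  : uniform on (0,1); the j-th offspring is a mutant iff xi (Mut t n j) < beta;
    xi (Fit t n j)  : distributed according to mu; the fitness the j-th offspring gets if mutant.
  All xi i are independent.  Since the positions of generation t+1 are determined by
  randomness of generations \<le> t, this yields exactly the laws of the models.
\<close>

datatype src = Off nat nat | Mut nat nat nat | Fit nat nat nat

datatype model = FMM | MMM

definition poisson_cdf :: "real \<Rightarrow> nat \<Rightarrow> real" where
  "poisson_cdf r n = (\<Sum>k\<le>n. r ^ k / fact k * exp (- r))"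

definition poisson_quantile :: "real \<Rightarrow> real \<Rightarrow> nat" where
  "poisson_quantile r u = (LEAST n. u \<le> poisson_cdf r n)"

definition n_off :: "(src \<Rightarrow> real) \<Rightarrow> nat \<Rightarrow> nat \<Rightarrow> real \<Rightarrow> nat" where
  "n_off w t n x = poisson_quantile x (w (Off t n))"

definition clones_of :: "real \<Rightarrow> (src \<Rightarrow> real) \<Rightarrow> nat \<Rightarrow> nat \<Rightarrow> real \<Rightarrow> real list" where
  "clones_of \<beta> w t n x = map (\<lambda>j. x) (filter (\<lambda>j. \<not> w (Mut t n j) < \<beta>) [0..<n_off w t n x])"

definition mutants_of :: "real \<Rightarrow> (src \<Rightarrow> real) \<Rightarrow> nat \<Rightarrow> nat \<Rightarrow> real \<Rightarrow> real list" where
  "mutants_of \<beta> w t n x = map (\<lambda>j. w (Fit t n j)) (filter (\<lambda>j. w (Mut t n j) < \<beta>) [0..<n_off w t n x])"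

definition all_clones :: "real \<Rightarrow> (src \<Rightarrow> real) \<Rightarrow> nat \<Rightarrow> real list \<Rightarrow> real list" where
  "all_clones \<beta> w t xs = concat (map (\<lambda>n. clones_of \<beta> w t n (xs ! n)) [0..<length xs])"

definition all_mutants :: "real \<Rightarrow> (src \<Rightarrow> real) \<Rightarrow> nat \<Rightarrow> real list \<Rightarrow> real list" where
  "all_mutants \<beta> w t xs = concat (map (\<lambda>n. mutants_of \<beta> w t n (xs ! n)) [0..<length xs])"

definition next_gen :: "model \<Rightarrow> real \<Rightarrow> (src \<Rightarrow> real) \<Rightarrow> nat \<Rightarrow> real list \<Rightarrow> real list" where
  "next_gen m \<beta> w t xs =
     (let ms = all_mutants \<beta> w t xs in
      all_clones \<beta> w t xs @
        (case m of MMM \<Rightarrow> ms | FMM \<Rightarrow> (if ms = [] then [] else [Max (set ms)])))"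

text \<open>Generation t as a list of fitnesses (X(t) = length of this list); generation 0 is [f].\<close>
primrec gen :: "model \<Rightarrow> real \<Rightarrow> real \<Rightarrow> (src \<Rightarrow> real) \<Rightarrow> nat \<Rightarrow> real list" where
  "gen m \<beta> f w 0 = [f]"
| "gen m \<beta> f w (Suc t) = next_gen m \<beta> w t (gen m \<beta> f w t)"

definition fittest_mutant :: "model \<Rightarrow> real \<Rightarrow> real \<Rightarrow> (src \<Rightarrow> real) \<Rightarrow> nat \<Rightarrow> real" where
  "fittest_mutant m \<beta> f w t =
     (let ms = all_mutants \<beta> w t (gen m \<beta> f w t) in if ms = [] then 0 else Max (set ms))"

definition survives :: "model \<Rightarrow> real \<Rightarrow> real \<Rightarrow> (src \<Rightarrow> real) \<Rightarrow> bool" where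
  "survives m \<beta> f w \<longleftrightarrow> (\<forall>t. gen m \<beta> f w t \<noteq> [])"

end

theory Submission
  imports Defs "HOL-Library.Countable"
begin

instance src :: countable by countable_datatype

fun time :: "src \<Rightarrow> nat" where
  "time (Off t n) = t" | "time (Mut t n j) = t" | "time (Fit t n j) = t"

lemma next_gen_cong:
  assumes "\<And>i. time i = t \<Longrightarrow> w i = w' i"
  shows "next_gen m \<beta> w t xs = next_gen m \<beta> w' t xs"
  using assms by (simp add: next_gen_def all_clones_def all_mutants_def clones_of_def
      mutants_of_def n_off_def)

lemma gen_cong:
  "(\<And>i. time i < t \<Longrightarrow> w i = w' i) \<Longrightarrow> gen m \<beta> f w t = gen m \<beta> f w' t"
proof (induction t)
  case 0 then show ?case by simp
next
  case (Suc t)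
  have "gen m \<beta> f w t = gen m \<beta> f w' t" using Suc by auto
  then show ?case using Suc.prems by (simp add: next_gen_cong[where w=w and w'=w'])
qed

lemma all_mutants_cong:
  assumes "\<And>i. time i = t \<Longrightarrow> w i = w' i"
  shows "all_mutants \<beta> w t xs = all_mutants \<beta> w' t xs"
  using assms by (simp add: all_mutants_def mutants_of_def n_off_def)

lemma fittest_cong:
  "(\<And>i. time i \<le> t \<Longrightarrow> w i = w' i) \<Longrightarrow> fittest_mutant m \<beta> f w t = fittest_mutant m \<beta> f w' t"
  unfolding fittest_mutant_def
  using gen_cong[of t w w' m \<beta> f] all_mutants_cong[of t w w' \<beta>] by simp

definition val :: "real \<Rightarrow> (src \<Rightarrow> real) \<Rightarrow> src option \<Rightarrow> real" where
  "val f w l = (case l of None \<Rightarrow> f | Some i \<Rightarrow> w i)"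

definition clones_lab where
  "clones_lab \<beta> f w t n l = map (\<lambda>j. l) (filter (\<lambda>j. \<not> w (Mut t n j) < \<beta>) [0..<n_off w t n (val f w l)])"
definition mutants_lab where
  "mutants_lab \<beta> f w t n l = map (\<lambda>j. Some (Fit t n j)) (filter (\<lambda>j. w (Mut t n j) < \<beta>) [0..<n_off w t n (val f w l)])"
definition all_clones_lab where
  "all_clones_lab \<beta> f w t L = concat (map (\<lambda>n. clones_lab \<beta> f w t n (L!n)) [0..<length L])"
definition all_mutants_lab where
  "all_mutants_lab \<beta> f w t L = concat (map (\<lambda>n. mutants_lab \<beta> f w t n (L!n)) [0..<length L])"
definition argmax_lab where
  "argmax_lab f w ms = hd (filter (\<lambda>l. val f w l = Max (set (map (val f w) ms))) ms)"
definition next_lab where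
  "next_lab m \<beta> f w t L = (let ms = all_mutants_lab \<beta> f w t L in all_clones_lab \<beta> f w t L @
     (case m of MMM \<Rightarrow> ms | FMM \<Rightarrow> (if ms = [] then [] else [argmax_lab f w ms])))"
primrec lab where
  "lab m \<beta> f w 0 = [None]"
| "lab m \<beta> f w (Suc t) = next_lab m \<beta> f w t (lab m \<beta> f w t)"

lemma map_all_mutants_lab:
  "map (val f w) (all_mutants_lab \<beta> f w t L) = all_mutants \<beta> w t (map (val f w) L)"
  unfolding all_mutants_lab_def all_mutants_def mutants_lab_def mutants_of_def map_concat
  by (intro arg_cong[where f=concat] map_cong) (auto simp: val_def)

lemma map_all_clones_lab:
  "map (val f w) (all_clones_lab \<beta> f w t L) = all_clones \<beta> w t (map (val f w) L)"
  unfolding all_clones_lab_def all_clones_def clones_lab_def clones_of_def map_concat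
  by (intro arg_cong[where f=concat] map_cong) auto

lemma argmax_lab:
  assumes "ms \<noteq> []"
  shows "val f w (argmax_lab f w ms) = Max (set (map (val f w) ms))"
proof -
  have "Max (set (map (val f w) ms)) \<in> set (map (val f w) ms)"
    using assms by (intro Max_in) auto
  then obtain l where l: "l \<in> set ms" "val f w l = Max (set (map (val f w) ms))" by auto
  then have "filter (\<lambda>l. val f w l = Max (set (map (val f w) ms))) ms \<noteq> []"
    by (auto simp: filter_empty_conv)
  then have "hd (filter (\<lambda>l. val f w l = Max (set (map (val f w) ms))) ms) \<in>
      set (filter (\<lambda>l. val f w l = Max (set (map (val f w) ms))) ms)" by (rule hd_in_set)
  then show ?thesis unfolding argmax_lab_def by simp
qed

lemma next_gen_map:
  "next_gen m \<beta> w t (map (val f w) L) = map (val f w) (next_lab m \<beta> f w t L)"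
  by (cases m) (auto simp: next_gen_def next_lab_def Let_def map_all_mutants_lab[symmetric]
        map_all_clones_lab[symmetric] argmax_lab)

lemma gen_lab: "gen m \<beta> f w t = map (val f w) (lab m \<beta> f w t)"
  by (induction t) (simp_all add: next_gen_map, simp add: val_def)

abbreviation S0 :: "(src \<Rightarrow> real) measure" where
  "S0 \<equiv> PiM UNIV (\<lambda>_. borel)"

lemma meas_coord[measurable]: "(\<lambda>w. w i) \<in> borel_measurable S0"
  by (rule measurable_component_singleton) simp

lemma meas_val[measurable]: "(\<lambda>w. val f w l) \<in> borel_measurable S0"
  by (cases l) (simp_all add: val_def)

lemma meas_cs1:
  fixes g :: "'b \<Rightarrow> 'c::countable"
  assumes "g \<in> measurable M (count_space UNIV)"
  shows "(\<lambda>x. h (g x)) \<in> measurable M (count_space UNIV)"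
  using measurable_compose[OF assms, of h "count_space UNIV"] by simp

lemma meas_cs2:
  fixes g1 :: "'b \<Rightarrow> 'c::countable" and g2 :: "'b \<Rightarrow> 'd::countable"
  assumes g1: "g1 \<in> measurable M (count_space UNIV)" and g2: "g2 \<in> measurable M (count_space UNIV)"
  shows "(\<lambda>x. h (g1 x) (g2 x)) \<in> measurable M (count_space UNIV)"
  by (rule measurable_compose_countable[where f="\<lambda>a x. h a (g2 x)", OF meas_cs1[OF g2] g1])

lemma meas_filter:
  fixes xs :: "'c::countable list"
  assumes "\<And>j. Measurable.pred M (\<lambda>x. P x j)"
  shows "(\<lambda>x. filter (P x) xs) \<in> measurable M (count_space UNIV)"
proof (induction xs)
  case Nil then show ?case by simp
next
  case (Cons a xs)
  have "(\<lambda>x. if P x a then a # filter (P x) xs else filter (P x) xs) \<in> measurable M (count_space UNIV)"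
    using assms[of a] Cons meas_cs1[OF Cons, of "\<lambda>l. a # l"] by measurable
  then show ?case by simp
qed

lemma meas_concat:
  fixes F :: "'b \<Rightarrow> 'c \<Rightarrow> 'd::countable list"
  assumes "\<And>n. (\<lambda>x. F x n) \<in> measurable M (count_space UNIV)"
  shows "(\<lambda>x. concat (map (F x) xs)) \<in> measurable M (count_space UNIV)"
proof (induction xs)
  case Nil then show ?case by simp
next
  case (Cons a xs)
  show ?case using meas_cs2[OF assms[of a] Cons, of "(@)"] by simp
qed

lemma meas_Max:
  assumes "\<And>i. (\<lambda>x. g x i) \<in> borel_measurable M" "ms \<noteq> []"
  shows "(\<lambda>x. Max (set (map (g x) ms)) :: real) \<in> borel_measurable M"
  using assms(2)
proof (induction ms)
  case Nil then show ?case by simp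
next
  case (Cons a ms)
  show ?case
  proof (cases "ms = []")
    case True then show ?thesis using assms(1) by simp
  next
    case False
    then have "(\<lambda>x. max (g x a) (Max (set (map (g x) ms)))) \<in> borel_measurable M"
      using Cons assms(1) by measurable
    then show ?thesis using False by (simp add: Max_insert)
  qed
qed

lemma meas_cdf[measurable]:
  assumes [measurable]: "g \<in> borel_measurable M"
  shows "(\<lambda>x. poisson_cdf (g x) k) \<in> borel_measurable M"
  unfolding poisson_cdf_def by measurable

lemma meas_n_off:
  assumes [measurable]: "g \<in> borel_measurable S0"
  shows "(\<lambda>w. n_off w t n (g w)) \<in> measurable S0 (count_space UNIV)"
  unfolding n_off_def poisson_quantile_def
proof (rule measurable_Least)
  fix k
  show "Measurable.pred S0 (\<lambda>w. w (Off t n) \<le> poisson_cdf (g w) k)"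
    unfolding pred_def by (rule borel_measurable_le[OF meas_coord meas_cdf[OF assms]])
qed

lemma meas_upt_filter:
  assumes N: "N \<in> measurable M (count_space UNIV)" and P: "\<And>j. Measurable.pred M (\<lambda>x. P x j)"
  shows "(\<lambda>x. filter (P x) [0..<N x]) \<in> measurable M (count_space UNIV)"
  by (rule measurable_compose_countable[where f="\<lambda>k x. filter (P x) [0..<k]", OF meas_filter[OF P] N])

lemma meas_mutants_lab:
  "(\<lambda>w. mutants_lab \<beta> f w t n l) \<in> measurable S0 (count_space UNIV)"
  unfolding mutants_lab_def
  by (rule meas_cs1[where h="map _"], rule meas_upt_filter[OF meas_n_off]) measurable

lemma meas_clones_lab:
  "(\<lambda>w. clones_lab \<beta> f w t n l) \<in> measurable S0 (count_space UNIV)"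
  unfolding clones_lab_def
  by (rule meas_cs1[where h="map _"], rule meas_upt_filter[OF meas_n_off]) measurable

lemma meas_all_mutants_lab:
  "(\<lambda>w. all_mutants_lab \<beta> f w t L) \<in> measurable S0 (count_space UNIV)"
  unfolding all_mutants_lab_def by (rule meas_concat, rule meas_mutants_lab)

lemma meas_all_clones_lab:
  "(\<lambda>w. all_clones_lab \<beta> f w t L) \<in> measurable S0 (count_space UNIV)"
  unfolding all_clones_lab_def by (rule meas_concat, rule meas_clones_lab)

lemma pred_eq_borel:
  "f \<in> borel_measurable M \<Longrightarrow> g \<in> borel_measurable M \<Longrightarrow> Measurable.pred M (\<lambda>x. (f x::real) = g x)"
  unfolding pred_def by (rule borel_measurable_eq)

lemma meas_argmax:
  assumes "ms \<noteq> []"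
  shows "(\<lambda>w. argmax_lab f w ms) \<in> measurable S0 (count_space UNIV)"
  unfolding argmax_lab_def
proof (rule meas_cs1[where h=hd], rule meas_filter)
  fix j
  have [measurable]: "(\<lambda>x. Max (set (map (val f x) ms))) \<in> borel_measurable S0"
    by (rule meas_Max[OF meas_val assms])
  show "Measurable.pred S0 (\<lambda>x. val f x j = Max (set (map (val f x) ms)))"
    by (rule pred_eq_borel[OF meas_val meas_Max[OF meas_val assms]])
qed

lemma meas_next_lab:
  "(\<lambda>w. next_lab m \<beta> f w t L) \<in> measurable S0 (count_space UNIV)"
proof -
  have 1: "(\<lambda>w. case m of MMM \<Rightarrow> all_mutants_lab \<beta> f w t L | FMM \<Rightarrow>
      (if all_mutants_lab \<beta> f w t L = [] then [] else [argmax_lab f w (all_mutants_lab \<beta> f w t L)]))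
      \<in> measurable S0 (count_space UNIV)"
  proof (cases m)
    case FMM
    have "(\<lambda>w. (\<lambda>ms w. if ms = [] then [] else [argmax_lab f w ms]) (all_mutants_lab \<beta> f w t L) w)
      \<in> measurable S0 (count_space UNIV)"
    proof (rule measurable_compose_countable[OF _ meas_all_mutants_lab])
      fix ms :: "src option list"
      show "(\<lambda>w. if ms = [] then [] else [argmax_lab f w ms]) \<in> measurable S0 (count_space UNIV)"
        by (cases "ms = []") (auto intro!: meas_cs1[OF meas_argmax])
    qed
    then show ?thesis using FMM by simp
  qed (simp add: meas_all_mutants_lab)
  show ?thesis unfolding next_lab_def Let_def
    by (rule meas_cs2[OF meas_all_clones_lab 1, of "(@)"])
qed

lemma meas_lab: "(\<lambda>w. lab m \<beta> f w t) \<in> measurable S0 (count_space UNIV)"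
proof (induction t)
  case 0 then show ?case by simp
next
  case (Suc t)
  show ?case
    by (simp, rule measurable_compose_countable[where f="\<lambda>L w. next_lab m \<beta> f w t L",
          OF meas_next_lab Suc])
qed

lemma meas_fittest: "(\<lambda>w. fittest_mutant m \<beta> f w s) \<in> borel_measurable S0"
proof -
  have eq: "fittest_mutant m \<beta> f w s = (\<lambda>ml w. if ml = [] then 0 else Max (set (map (val f w) ml)))
     (all_mutants_lab \<beta> f w s (lab m \<beta> f w s)) w" for w
    by (simp add: fittest_mutant_def gen_lab map_all_mutants_lab[symmetric])
  have m1: "(\<lambda>w. all_mutants_lab \<beta> f w s (lab m \<beta> f w s)) \<in> measurable S0 (count_space UNIV)"
    by (rule measurable_compose_countable[where f="\<lambda>L w. all_mutants_lab \<beta> f w s L",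
          OF meas_all_mutants_lab meas_lab])
  show ?thesis unfolding eq
  proof (rule measurable_compose_countable[OF _ m1])
    fix ml :: "src option list"
    show "(\<lambda>w. if ml = [] then 0 else Max (set (map (val f w) ml))) \<in> borel_measurable S0"
      by (cases "ml = []") (simp_all add: meas_Max[OF meas_val])
  qed
qed

definition S_pred where
  "S_pred m \<beta> f K t w \<longleftrightarrow> gen m \<beta> f w t \<noteq> [] \<and> (\<forall>s<t. fittest_mutant m \<beta> f w s \<le> K)"

definition E_pred where
  "E_pred m \<beta> f K t i w \<longleftrightarrow> S_pred m \<beta> f K t w \<and> i < length (gen m \<beta> f w t) \<and>
     (\<forall>n<i. n_off w t n (gen m \<beta> f w t ! n) = 0) \<and> n_off w t i (gen m \<beta> f w t ! i) \<noteq> 0"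

definition B_pred where
  "B_pred \<beta> K t i w \<longleftrightarrow> w (Mut t i 0) < \<beta> \<and> K < w (Fit t i 0)"

lemma meas_S: "Measurable.pred S0 (S_pred m \<beta> f K t)"
proof -
  have 1: "Measurable.pred S0 (\<lambda>w. gen m \<beta> f w t \<noteq> [])"
    unfolding gen_lab using meas_cs1[OF meas_lab, of "\<lambda>L. L \<noteq> []"] by simp
  have [measurable]: "\<And>s. (\<lambda>w. fittest_mutant m \<beta> f w s) \<in> borel_measurable S0" by (rule meas_fittest)
  have 2: "Measurable.pred S0 (\<lambda>w. fittest_mutant m \<beta> f w s \<le> K)" for s
    unfolding pred_def by (rule borel_measurable_le) (simp_all add: meas_fittest)
  have 3: "Measurable.pred S0 (\<lambda>w. \<forall>s<t. fittest_mutant m \<beta> f w s \<le> K)"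
    using 2 by measurable
  show ?thesis unfolding S_pred_def[abs_def] using 1 3 by measurable
qed

lemma meas_E: "Measurable.pred S0 (E_pred m \<beta> f K t i)"
proof -
  define Q where "Q = (\<lambda>L w. i < length L \<and> (\<forall>n<i. n_off w t n (val f w (L ! n)) = 0) \<and>
      n_off w t i (val f w (L ! i)) \<noteq> 0)"
  have eq: "E_pred m \<beta> f K t i w = (S_pred m \<beta> f K t w \<and> Q (lab m \<beta> f w t) w)" for w
    unfolding E_pred_def Q_def gen_lab by auto
  have nm: "Measurable.pred S0 (\<lambda>w. n_off w t n (val f w l) = 0)" for n l
    using meas_cs1[OF meas_n_off[OF meas_val], of "\<lambda>k. k = 0"] by simp
  have QL: "Measurable.pred S0 (Q L)" for L
    unfolding Q_def using nm by measurable
  have "Measurable.pred S0 (\<lambda>w. Q (lab m \<beta> f w t) w)"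
    by (rule measurable_compose_countable[OF QL meas_lab])
  then show ?thesis unfolding eq[abs_def] using meas_S by measurable
qed

lemma S_pred_step:
  assumes "S_pred m \<beta> f K (Suc t) w"
  shows "\<exists>i. E_pred m \<beta> f K t i w \<and> \<not> B_pred \<beta> K t i w"
proof -
  let ?xs = "gen m \<beta> f w t"
  have ne: "next_gen m \<beta> w t ?xs \<noteq> []" and fk: "\<And>s. s < Suc t \<Longrightarrow> fittest_mutant m \<beta> f w s \<le> K"
    using assms by (auto simp: S_pred_def)
  have ex: "\<exists>n. n < length ?xs \<and> n_off w t n (?xs ! n) \<noteq> 0"
  proof (rule ccontr)
    assume "\<not> ?thesis"
    then have "all_clones \<beta> w t ?xs = []" "all_mutants \<beta> w t ?xs = []"
      by (auto simp: all_clones_def all_mutants_def clones_of_def mutants_of_def)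
    then have "next_gen m \<beta> w t ?xs = []" by (cases m) (simp_all add: next_gen_def)
    with ne show False by simp
  qed
  define i where "i = (LEAST n. n < length ?xs \<and> n_off w t n (?xs ! n) \<noteq> 0)"
  have i: "i < length ?xs" "n_off w t i (?xs ! i) \<noteq> 0"
    using LeastI_ex[OF ex] unfolding i_def by auto
  have lt: "\<forall>n<i. n_off w t n (?xs ! n) = 0"
  proof (intro allI impI)
    fix n assume "n < i"
    then have "\<not> (n < length ?xs \<and> n_off w t n (?xs ! n) \<noteq> 0)"
      unfolding i_def by (rule not_less_Least)
    then show "n_off w t n (?xs ! n) = 0" using \<open>n < i\<close> i by auto
  qed
  have S: "S_pred m \<beta> f K t w" using i fk by (auto simp: S_pred_def)
  have E: "E_pred m \<beta> f K t i w" using S i lt by (simp add: E_pred_def)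
  have "\<not> B_pred \<beta> K t i w"
  proof
    assume B: "B_pred \<beta> K t i w"
    have "w (Fit t i 0) \<in> set (mutants_of \<beta> w t i (?xs ! i))"
      using B i by (auto simp: B_pred_def mutants_of_def)
    then have inm: "w (Fit t i 0) \<in> set (all_mutants \<beta> w t ?xs)"
      using i unfolding all_mutants_def by force
    then have "w (Fit t i 0) \<le> fittest_mutant m \<beta> f w t"
      unfolding fittest_mutant_def Let_def by (auto intro!: Max_ge)
    with fk[of t] B show False by (simp add: B_pred_def)
  qed
  with E show ?thesis by blast
qed

lemma E_S: "E_pred m \<beta> f K t i w \<Longrightarrow> S_pred m \<beta> f K t w"
  by (simp add: E_pred_def)

lemma E_disj: "E_pred m \<beta> f K t i w \<Longrightarrow> E_pred m \<beta> f K t j w \<Longrightarrow> i = j"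
  unfolding E_pred_def by (metis linorder_neqE_nat)

lemma S_local:
  "(\<And>i. time i < t \<Longrightarrow> w i = w' i) \<Longrightarrow> S_pred m \<beta> f K t w = S_pred m \<beta> f K t w'"
  unfolding S_pred_def using gen_cong[of t w w' m \<beta> f] fittest_cong[of _ w w' m \<beta> f]
  by (metis (no_types, lifting) le_less_trans)

lemma E_local:
  assumes "\<And>i. i \<in> {i. time i < t} \<union> range (Off t) \<Longrightarrow> w i = w' i"
  shows "E_pred m \<beta> f K t j w = E_pred m \<beta> f K t j w'"
proof -
  have g: "gen m \<beta> f w t = gen m \<beta> f w' t" using assms by (intro gen_cong) auto
  have n: "n_off w t n x = n_off w' t n x" for n x using assms by (simp add: n_off_def)
  show ?thesis unfolding E_pred_def g n using S_local[of t w w' m \<beta> f K] assms by auto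
qed

lemma meas_ext: "(\<lambda>v. (\<lambda>i. if i \<in> A then v i else 0::real)) \<in> measurable (PiM A (\<lambda>_. borel)) S0"
proof (rule measurable_PiM_single')
  fix i :: src
  show "(\<lambda>v. if i \<in> A then v i else 0::real) \<in> borel_measurable (PiM A (\<lambda>_. borel))"
    by (cases "i \<in> A") (simp_all add: measurable_component_singleton)
qed simp

lemma (in prob_space) indep_local:
  fixes \<xi> :: "src \<Rightarrow> 'a \<Rightarrow> real"
  assumes ind: "indep_vars (\<lambda>_. borel) \<xi> UNIV" and CD: "C \<inter> D = {}"
    and P: "Measurable.pred S0 P" and Q: "Measurable.pred S0 Q"
    and locP: "\<And>w w'. (\<And>i. i \<in> C \<Longrightarrow> w i = w' i) \<Longrightarrow> P w = P w'"
    and locQ: "\<And>w w'. (\<And>i. i \<in> D \<Longrightarrow> w i = w' i) \<Longrightarrow> Q w = Q w'"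
  shows "prob {\<omega>\<in>space M. P (\<lambda>i. \<xi> i \<omega>) \<and> Q (\<lambda>i. \<xi> i \<omega>)} =
         prob {\<omega>\<in>space M. P (\<lambda>i. \<xi> i \<omega>)} * prob {\<omega>\<in>space M. Q (\<lambda>i. \<xi> i \<omega>)}"
proof -
  define ext where "ext A v = (\<lambda>i. if i \<in> A then v i else 0::real)" for A :: "src set" and v
  have extm: "ext A \<in> measurable (PiM A (\<lambda>_. borel)) S0" for A
    unfolding ext_def[abs_def] by (rule meas_ext)
  define PA where "PA = {v \<in> space (PiM C (\<lambda>_. borel)). P (ext C v)}"
  define QB where "QB = {v \<in> space (PiM D (\<lambda>_. borel)). Q (ext D v)}"
  have PA: "PA \<in> sets (PiM C (\<lambda>_. borel))"
    unfolding PA_def using measurable_compose[OF extm P] unfolding pred_def by simp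
  have QB: "QB \<in> sets (PiM D (\<lambda>_. borel))"
    unfolding QB_def using measurable_compose[OF extm Q] unfolding pred_def by simp
  have rP: "P (ext C (restrict g C)) = P g" for g
    by (rule locP) (simp add: ext_def)
  have rQ: "Q (ext D (restrict g D)) = Q g" for g
    by (rule locQ) (simp add: ext_def)
  have sp: "restrict g A \<in> space (PiM A (\<lambda>_. borel::real measure))" for g A
    by (simp add: space_PiM)
  have e1: "{\<omega>\<in>space M. P (\<lambda>i. \<xi> i \<omega>)} = (\<lambda>\<omega>. restrict (\<lambda>i. \<xi> i \<omega>) C) -` PA \<inter> space M"
    unfolding PA_def using rP sp by auto
  have e2: "{\<omega>\<in>space M. Q (\<lambda>i. \<xi> i \<omega>)} = (\<lambda>\<omega>. restrict (\<lambda>i. \<xi> i \<omega>) D) -` QB \<inter> space M"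
    unfolding QB_def using rQ sp by auto
  have e3: "{\<omega>\<in>space M. P (\<lambda>i. \<xi> i \<omega>) \<and> Q (\<lambda>i. \<xi> i \<omega>)} =
     (\<lambda>x. (restrict (\<lambda>i. \<xi> i x) C, restrict (\<lambda>i. \<xi> i x) D)) -` (PA \<times> QB) \<inter> space M"
    unfolding PA_def QB_def using rP rQ sp by auto
  show ?thesis unfolding e1 e2 e3
    by (rule indep_varD[OF indep_var_restrict[OF ind CD] PA QB]) auto
qed

lemma (in prob_space) prob_B:
  fixes \<xi> :: "src \<Rightarrow> 'a \<Rightarrow> real"
  assumes ind: "indep_vars (\<lambda>_. borel) \<xi> UNIV"
    and dm: "distr M borel (\<xi> (Mut t i 0)) = uniform_measure lborel {0<..<1}"
    and df: "distr M borel (\<xi> (Fit t i 0)) = \<mu>"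
    and b: "0 \<le> \<beta>" "\<beta> \<le> 1"
  shows "prob {\<omega>\<in>space M. B_pred \<beta> K t i (\<lambda>j. \<xi> j \<omega>)} = \<beta> * measure \<mu> {K<..}"
proof -
  define A where "A j = (if j = Mut t i 0 then {..<\<beta>} else {K<..})" for j
  have rv: "\<xi> j \<in> borel_measurable M" for j using ind by (simp add: indep_vars_def)
  have "prob (\<Inter>j\<in>{Mut t i 0, Fit t i 0}. \<xi> j -` A j \<inter> space M) =
        (\<Prod>j\<in>{Mut t i 0, Fit t i 0}. prob (\<xi> j -` A j \<inter> space M))"
    by (rule indep_varsD[OF ind]) (auto simp: A_def)
  moreover have "(\<Inter>j\<in>{Mut t i 0, Fit t i 0}. \<xi> j -` A j \<inter> space M) =
      {\<omega>\<in>space M. B_pred \<beta> K t i (\<lambda>j. \<xi> j \<omega>)}"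
    by (auto simp: A_def B_pred_def)
  moreover have "prob (\<xi> (Mut t i 0) -` {..<\<beta>} \<inter> space M) = \<beta>"
  proof -
    have "prob (\<xi> (Mut t i 0) -` {..<\<beta>} \<inter> space M) = measure (distr M borel (\<xi> (Mut t i 0))) {..<\<beta>}"
      by (rule measure_distr[symmetric]) (simp_all add: rv)
    also have "\<dots> = measure lborel ({0<..<1} \<inter> {..<\<beta>}) / measure lborel {0<..<(1::real)}"
      unfolding dm by (rule measure_uniform_measure) simp_all
    also have "{0<..<1} \<inter> {..<\<beta>} = {0<..<\<beta>}" using b by auto
    finally show ?thesis using b by simp
  qed
  moreover have "prob (\<xi> (Fit t i 0) -` {K<..} \<inter> space M) = measure \<mu> {K<..}"
    by (subst measure_distr[symmetric, OF rv], simp, simp add: df)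
  ultimately show ?thesis by (simp add: A_def)
qed

theorem lemma1:
  fixes M :: "'a measure" and \<xi> :: "src \<Rightarrow> 'a \<Rightarrow> real"
    and \<mu> :: "real measure" and \<beta> f :: real and m :: model
  assumes M: "prob_space M"
    and mu_prob: "prob_space \<mu>" and mu_sets: "sets \<mu> = sets borel"
    and mu_pos: "measure \<mu> {0<..} = 1"
    and G_pos: "\<And>x. x > 0 \<Longrightarrow> measure \<mu> {x<..} > 0"
    and beta: "0 < \<beta>" "\<beta> < 1"
    and f: "f > 0"
    and indep: "prob_space.indep_vars M (\<lambda>_. borel) \<xi> UNIV"
    and d_off: "\<And>t n. distr M borel (\<xi> (Off t n)) = uniform_measure lborel {0<..<1}"
    and d_mut: "\<And>t n j. distr M borel (\<xi> (Mut t n j)) = uniform_measure lborel {0<..<1}"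
    and d_fit: "\<And>t n j. distr M borel (\<xi> (Fit t n j)) = \<mu>"
  shows "AE \<omega> in M. survives m \<beta> f (\<lambda>i. \<xi> i \<omega>) \<longrightarrow>
           \<not> bdd_above (range (\<lambda>t. fittest_mutant m \<beta> f (\<lambda>i. \<xi> i \<omega>) t))"
proof -
  interpret prob_space M by (rule M)
  have rv: "\<xi> j \<in> borel_measurable M" for j using indep by (simp add: indep_vars_def)
  have Xm: "(\<lambda>\<omega> i. \<xi> i \<omega>) \<in> measurable M S0"
    by (rule measurable_PiM_single') (simp_all add: rv)
  have ev: "{\<omega>\<in>space M. P (\<lambda>i. \<xi> i \<omega>)} \<in> events" if "Measurable.pred S0 P" for P
    using measurable_compose[OF Xm that] unfolding pred_def by simp
  define Kr where "Kr K = real (Suc K)" for K :: nat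
  define q where "q K = 1 - \<beta> * measure \<mu> {Kr K<..}" for K
  define Sset where "Sset K t = {\<omega>\<in>space M. S_pred m \<beta> f (Kr K) t (\<lambda>i. \<xi> i \<omega>)}" for K t
  define Eset where "Eset K t i = {\<omega>\<in>space M. E_pred m \<beta> f (Kr K) t i (\<lambda>i. \<xi> i \<omega>)}" for K t i
  define Bc where "Bc K t i = {\<omega>\<in>space M. \<not> B_pred \<beta> (Kr K) t i (\<lambda>i. \<xi> i \<omega>)}" for K t i
  have predB: "Measurable.pred S0 (B_pred \<beta> k t i)" for k t i
    unfolding B_pred_def[abs_def] by measurable
  have S_ev: "Sset K t \<in> events" for K t unfolding Sset_def by (rule ev[OF meas_S])
  have E_ev: "Eset K t i \<in> events" for K t i unfolding Eset_def by (rule ev[OF meas_E])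
  have B_ev: "Bc K t i \<in> events" for K t i unfolding Bc_def
    by (rule ev) (use predB in measurable)
  have q01: "0 \<le> q K" "q K < 1" for K
  proof -
    have "measure \<mu> {Kr K<..} \<le> 1" by (rule prob_space.prob_le_1[OF mu_prob])
    moreover have "measure \<mu> {Kr K<..} > 0" by (rule G_pos) (simp add: Kr_def)
    ultimately show "0 \<le> q K" "q K < 1" using beta unfolding q_def
      by (auto simp: mult_le_one intro!: mult_pos_pos)
  qed
  have probBc: "prob (Bc K t i) = q K" for K t i
  proof -
    have "Bc K t i = space M - {\<omega>\<in>space M. B_pred \<beta> (Kr K) t i (\<lambda>i. \<xi> i \<omega>)}"
      unfolding Bc_def by auto
    then show ?thesis unfolding q_def
      using prob_compl[OF ev[OF predB]] prob_B[OF indep d_mut d_fit, of \<beta> "Kr K"] beta by simp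
  qed
  have probEB: "prob (Eset K t i \<inter> Bc K t i) = prob (Eset K t i) * q K" for K t i
  proof -
    have "prob (Eset K t i \<inter> Bc K t i) =
      prob {\<omega>\<in>space M. E_pred m \<beta> f (Kr K) t i (\<lambda>i. \<xi> i \<omega>) \<and> (\<lambda>w. \<not> B_pred \<beta> (Kr K) t i w) (\<lambda>i. \<xi> i \<omega>)}"
      unfolding Eset_def Bc_def by (rule arg_cong[where f=prob]) auto
    also have "\<dots> = prob (Eset K t i) * prob (Bc K t i)"
      unfolding Eset_def Bc_def
    proof (rule indep_local[OF indep, where C="{i. time i < t} \<union> range (Off t)" and D="{Mut t i 0, Fit t i 0}"])
      show "Measurable.pred S0 (\<lambda>w. \<not> B_pred \<beta> (Kr K) t i w)" using predB by measurable
      show "({i. time i < t} \<union> range (Off t)) \<inter> {Mut t i 0, Fit t i 0} = {}" by auto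
      show "Measurable.pred S0 (E_pred m \<beta> f (Kr K) t i)" by (rule meas_E)
      show "E_pred m \<beta> f (Kr K) t i w = E_pred m \<beta> f (Kr K) t i w'"
        if "\<And>j. j \<in> {i. time i < t} \<union> range (Off t) \<Longrightarrow> w j = w' j" for w w'
        by (rule E_local[OF that])
      show "(\<not> B_pred \<beta> (Kr K) t i w) = (\<not> B_pred \<beta> (Kr K) t i w')"
        if "\<And>j. j \<in> {Mut t i 0, Fit t i 0} \<Longrightarrow> w j = w' j" for w w'
        using that by (simp add: B_pred_def)
    qed
    finally show ?thesis using probBc by simp
  qed
  have step: "prob (Sset K (Suc t)) \<le> q K * prob (Sset K t)" for K t
  proof -
    have sub: "Sset K (Suc t) \<subseteq> (\<Union>i. Eset K t i \<inter> Bc K t i)"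
    proof
      fix \<omega> assume "\<omega> \<in> Sset K (Suc t)"
      then have om: "\<omega> \<in> space M" "S_pred m \<beta> f (Kr K) (Suc t) (\<lambda>i. \<xi> i \<omega>)"
        unfolding Sset_def by auto
      obtain i where "E_pred m \<beta> f (Kr K) t i (\<lambda>i. \<xi> i \<omega>)" "\<not> B_pred \<beta> (Kr K) t i (\<lambda>i. \<xi> i \<omega>)"
        using S_pred_step[OF om(2)] by blast
      then have "\<omega> \<in> Eset K t i \<inter> Bc K t i" using om(1) unfolding Eset_def Bc_def by simp
      then show "\<omega> \<in> (\<Union>i. Eset K t i \<inter> Bc K t i)" by (rule UN_I[OF UNIV_I])
    qed
    have dE: "disjoint_family (Eset K t)"
      unfolding disjoint_family_on_def
    proof (intro ballI impI)
      fix i j :: nat assume "i \<noteq> j"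
      then show "Eset K t i \<inter> Eset K t j = {}"
        unfolding Eset_def using E_disj[of m \<beta> f "Kr K" t i _ j] by auto
    qed
    have dEB: "disjoint_family (\<lambda>i. Eset K t i \<inter> Bc K t i)"
      by (rule disjoint_family_on_mono[OF subset_refl], rule disjoint_family_on_bisimulation[OF dE]) auto
    have s1: "(\<lambda>i. prob (Eset K t i \<inter> Bc K t i)) sums prob (\<Union>i. Eset K t i \<inter> Bc K t i)"
      by (rule measure_UNION) (use dEB E_ev B_ev in \<open>auto simp: emeasure_finite\<close>)
    have s2: "(\<lambda>i. prob (Eset K t i)) sums prob (\<Union>i. Eset K t i)"
      by (rule measure_UNION) (use dE E_ev in \<open>auto simp: emeasure_finite\<close>)
    have "(\<lambda>i. prob (Eset K t i \<inter> Bc K t i)) sums (prob (\<Union>i. Eset K t i) * q K)"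
      unfolding probEB by (rule sums_mult2[OF s2])
    then have eq: "prob (\<Union>i. Eset K t i \<inter> Bc K t i) = prob (\<Union>i. Eset K t i) * q K"
      by (rule sums_unique2[OF s1])
    have "prob (Sset K (Suc t)) \<le> prob (\<Union>i. Eset K t i \<inter> Bc K t i)"
      by (rule finite_measure_mono[OF sub]) (use E_ev B_ev in auto)
    also have "\<dots> = prob (\<Union>i. Eset K t i) * q K" by (rule eq)
    also have "\<dots> \<le> prob (Sset K t) * q K"
    proof (rule mult_right_mono[OF _ q01(1)])
      show "prob (\<Union>i. Eset K t i) \<le> prob (Sset K t)"
        by (rule finite_measure_mono) (use E_S S_ev in \<open>auto simp: Eset_def Sset_def\<close>)
    qed
    finally show ?thesis by (simp add: mult.commute)
  qed
  have bound: "prob (Sset K t) \<le> q K ^ t" for K t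
  proof (induction t)
    case 0 show ?case by simp
  next
    case (Suc t)
    have "prob (Sset K (Suc t)) \<le> q K * prob (Sset K t)" by (rule step)
    also have "\<dots> \<le> q K * q K ^ t" by (rule mult_left_mono[OF Suc q01(1)])
    finally show ?case by simp
  qed
  have null: "(\<Inter>t. Sset K t) \<in> null_sets M" for K
  proof -
    have ins: "(\<Inter>t. Sset K t) \<in> events" using S_ev by auto
    have le: "prob (\<Inter>t. Sset K t) \<le> q K ^ t" for t
    proof -
      have "(\<Inter>t. Sset K t) \<subseteq> Sset K t" by blast
      then have "prob (\<Inter>t. Sset K t) \<le> prob (Sset K t)" by (rule finite_measure_mono) (rule S_ev)
      then show ?thesis using bound[of K t] by linarith
    qed
    have "(\<lambda>t. q K ^ t) \<longlonglongrightarrow> 0" using q01 by (intro LIMSEQ_power_zero) auto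
    then have "prob (\<Inter>t. Sset K t) \<le> 0" using le by (intro LIMSEQ_le_const) auto
    then have "prob (\<Inter>t. Sset K t) = 0" using measure_nonneg[of M] by (simp add: measure_le_0_iff)
    then show ?thesis using ins by (simp add: null_sets_def emeasure_eq_measure)
  qed
  show ?thesis
  proof (rule AE_I'[OF null_sets_UN[OF null]])
    show "{\<omega>\<in>space M. \<not> (survives m \<beta> f (\<lambda>i. \<xi> i \<omega>) \<longrightarrow>
           \<not> bdd_above (range (\<lambda>t. fittest_mutant m \<beta> f (\<lambda>i. \<xi> i \<omega>) t)))} \<subseteq> (\<Union>K. \<Inter>t. Sset K t)"
    proof (rule subsetI)
      fix \<omega> assume "\<omega> \<in> {\<omega>\<in>space M. \<not> (survives m \<beta> f (\<lambda>i. \<xi> i \<omega>) \<longrightarrow>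
           \<not> bdd_above (range (\<lambda>t. fittest_mutant m \<beta> f (\<lambda>i. \<xi> i \<omega>) t)))}"
      then have \<omega>: "\<omega> \<in> space M" and sv: "survives m \<beta> f (\<lambda>i. \<xi> i \<omega>)"
        and bd: "bdd_above (range (\<lambda>t. fittest_mutant m \<beta> f (\<lambda>i. \<xi> i \<omega>) t))" by auto
      obtain B where B: "\<And>t. fittest_mutant m \<beta> f (\<lambda>i. \<xi> i \<omega>) t \<le> B"
        using bd unfolding bdd_above_def by auto
      have "B \<le> Kr (nat \<lceil>B\<rceil>)" unfolding Kr_def using real_nat_ceiling_ge[of B] by simp
      then have "\<omega> \<in> Sset (nat \<lceil>B\<rceil>) t" for t
        using \<omega> sv B unfolding Sset_def S_pred_def survives_def by (auto intro: order_trans)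
      then show "\<omega> \<in> (\<Union>K. \<Inter>t. Sset K t)" by blast
    qed
  qed
qed

end
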